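(* Let $d>2$ and let $\{|k\rangle\}_{k=0}^{d-1}$ be the standard basis of $\mathbb{C}^d$. Define $K_j:=\frac1{\sqrt2}|j\rangle\langle j+1\bmod d|$ for $j=0,\dots,d-1$ and $K_d:=\frac1{\sqrt2}\sum_{k=0}^{d-1}e^{\pi ik/d}|k\rangle\langle k|$, and $T(\rho):=\sum_{j=0}^dK_j\rho K_j^\dagger$ on $\mathcal{M}_d(\mathbb{C})$. Then $T$ is completely positive, trace-preserving, unital and primitive, and its matrix representation $\hat T$ satisfies $\mathrm{tr}[\hat T]>0$ and $\mathrm{tr}[\hat T^2]=0$. Consequently, for the multiset $\Lambda=\mathrm{spec}(T)\setminus\{0\}$ one has $\mu_1(\Lambda)>0$ but $\mu_2(\Lambda)=0$, and the inequality $\mu_k(\Lambda)^m\le D^{m-1}\mu_{km}(\Lambda)$ fails for $k=1,m=2$ for every $D\in\mathbb{N}$.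
   Context: $\mu_k(\Lambda):=\sum_{\lambda\in\Lambda}\lambda^k$ (with multiplicity). A positive linear map is primitive if its spectral radius is a non-degenerate eigenvalue with positive definite eigenvector and no other eigenvalue has modulus equal to the spectral radius. Unital: $T(\mathbbm{1})=\mathbbm{1}$; trace-preserving: $\mathrm{tr}[T(X)]=\mathrm{tr}[X]$. *)

theory Defs
  imports "Jordan_Normal_Form.Schur_Decomposition" "Jordan_Normal_Form.Spectral_Radius"
    "HOL-Library.Complex_Order"
begin

text \<open>Complex numbers carry the partial order of HOL-Library.Complex_Order:
  z \<le> w iff Re z \<le> Re w and Im z = Im w. So 0 < z means z is a positive real.\<close>

definition psd :: "nat \<Rightarrow> complex mat \<Rightarrow> bool" where
  "psd n A \<longleftrightarrow> A \<in> carrier_mat n n \<and>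
     (\<forall>v \<in> carrier_vec n. 0 \<le> conjugate v \<bullet> (A *\<^sub>v v))"

definition pos_def :: "nat \<Rightarrow> complex mat \<Rightarrow> bool" where
  "pos_def n A \<longleftrightarrow> A \<in> carrier_mat n n \<and>
     (\<forall>v \<in> carrier_vec n. v \<noteq> 0\<^sub>v n \<longrightarrow> 0 < conjugate v \<bullet> (A *\<^sub>v v))"

definition ketbra :: "nat \<Rightarrow> nat \<Rightarrow> nat \<Rightarrow> complex mat" where
  "ketbra d j l = mat d d (\<lambda>(a, b). if a = j \<and> b = l then 1 else 0)"

text \<open>Ampliation id_n \<otimes> T acting on an (n d) x (n d) matrix seen as n x n blocks of d x d matrices.\<close>
definition ampliation :: "nat \<Rightarrow> nat \<Rightarrow> (complex mat \<Rightarrow> complex mat) \<Rightarrow> complex mat \<Rightarrow> complex mat" where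
  "ampliation n d T X = mat (n * d) (n * d) (\<lambda>(a, b).
     T (mat d d (\<lambda>(p, q). X $$ ((a div d) * d + p, (b div d) * d + q))) $$ (a mod d, b mod d))"

definition completely_positive :: "nat \<Rightarrow> (complex mat \<Rightarrow> complex mat) \<Rightarrow> bool" where
  "completely_positive d T \<longleftrightarrow>
     (\<forall>n X. psd (n * d) X \<longrightarrow> psd (n * d) (ampliation n d T X))"

definition mtrace :: "complex mat \<Rightarrow> complex" where
  "mtrace A = (\<Sum>i < dim_row A. A $$ (i, i))"

definition trace_preserving :: "nat \<Rightarrow> (complex mat \<Rightarrow> complex mat) \<Rightarrow> bool" where
  "trace_preserving d T \<longleftrightarrow> (\<forall>X \<in> carrier_mat d d. mtrace (T X) = mtrace X)"

definition unital :: "nat \<Rightarrow> (complex mat \<Rightarrow> complex mat) \<Rightarrow> bool" where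
  "unital d T \<longleftrightarrow> T (1\<^sub>m d) = 1\<^sub>m d"

text \<open>Matrix representation of T on M_d(C) w.r.t. the matrix units, vectorising X as
  the d^2-vector with entry X(a,b) at index a*d+b.\<close>
definition mat_rep :: "nat \<Rightarrow> (complex mat \<Rightarrow> complex mat) \<Rightarrow> complex mat" where
  "mat_rep d T = mat (d * d) (d * d) (\<lambda>(i, j). T (ketbra d (j div d) (j mod d)) $$ (i div d, i mod d))"

definition map_spectrum :: "nat \<Rightarrow> (complex mat \<Rightarrow> complex mat) \<Rightarrow> complex multiset" where
  "map_spectrum d T = proots (char_poly (mat_rep d T))"

definition primitive :: "nat \<Rightarrow> (complex mat \<Rightarrow> complex mat) \<Rightarrow> bool" where
  "primitive d T \<longleftrightarrow>
     (let r = spectral_radius (mat_rep d T) in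
        count (map_spectrum d T) (complex_of_real r) = 1 \<and>
        (\<exists>X. pos_def d X \<and> T X = complex_of_real r \<cdot>\<^sub>m X) \<and>
        (\<forall>z \<in># map_spectrum d T. cmod z = r \<longrightarrow> z = complex_of_real r))"

definition moment :: "nat \<Rightarrow> complex multiset \<Rightarrow> complex" where
  "moment k \<Lambda> = (\<Sum>\<^sub># (image_mset (\<lambda>z. z ^ k) \<Lambda>))"

definition kraus :: "nat \<Rightarrow> nat \<Rightarrow> complex mat" where
  "kraus d j = (if j < d then complex_of_real (1 / sqrt 2) \<cdot>\<^sub>m ketbra d j ((j + 1) mod d)
     else complex_of_real (1 / sqrt 2) \<cdot>\<^sub>m
       mat d d (\<lambda>(a, b). if a = b then exp (\<i> * complex_of_real (pi * real a / real d)) else 0))"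

definition exT :: "nat \<Rightarrow> complex mat \<Rightarrow> complex mat" where
  "exT d \<rho> = mat d d (\<lambda>ab. \<Sum>j \<in> {0..d}. (kraus d j * \<rho> * mat_adjoint (kraus d j)) $$ ab)"

end

theory Submission
  imports Defs
begin

definition om :: "nat \<Rightarrow> complex" where "om d = cis (pi / real d)"

lemma om_pow: "om d ^ k = cis (real k * (pi / real d))"
  unfolding om_def by (simp add: DeMoivre)

lemma exp_om: "exp (\<i> * complex_of_real (pi * real a / real d)) = om d ^ a"
  unfolding om_pow cis_conv_exp by (simp add: field_simps)

lemma norm_om_pow[simp]: "cmod (om d ^ k) = 1"
  unfolding om_pow by simp

lemma cnj_om_pow[simp]: "cnj (om d ^ k) * om d ^ k = 1" "om d ^ k * cnj (om d ^ k) = 1"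
  unfolding om_pow cis_cnj cis_mult by simp_all

lemma om_pow_d: assumes "d > 0" shows "om d ^ d = -1"
  using assms unfolding om_pow by simp

lemma zeta_pow_d: assumes "d > 0" shows "(om d ^ 2) ^ d = 1"
proof -
  have "(om d ^ 2) ^ d = (om d ^ d) ^ 2" by (simp add: power_mult[symmetric] mult.commute)
  thus ?thesis using om_pow_d[OF assms] by simp
qed

lemma zeta_pow_ne1: assumes "0 < k" "k < d" shows "(om d ^ 2) ^ k \<noteq> 1"
proof
  assume h: "(om d ^ 2) ^ k = 1"
  have "(om d ^ 2) ^ k = om d ^ (2*k)" by (simp add: power_mult)
  also have "\<dots> = cis (2 * pi * real k / real d)" unfolding om_pow
    by (simp add: ac_simps)
  finally have "cis (2 * pi * real k / real d) = 1" using h by simp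
  hence "cos (2 * pi * real k / real d) = 1" by (metis cis.sel(1) one_complex.sel(1))
  then obtain n :: int where n: "2 * pi * real k / real d = real_of_int n * 2 * pi"
    unfolding cos_one_2pi_int by blast
  have "real k / real d = (2 * pi * real k / real d) / (2*pi)" by simp
  also have "\<dots> = real_of_int n" using n by simp
  finally have q: "real k / real d = real_of_int n" .
  moreover have "0 < real k / real d" "real k / real d < 1" using assms by auto
  ultimately have "0 < n" "n < 1" by simp_all
  thus False by simp
qed

lemma divmod_simps[simp]: assumes "b < (d::nat)" shows "(a*d+b) div d = a" "(a*d+b) mod d = b"
  using assms by auto

lemma sum_pair_gen: "(\<Sum>i<(m::nat)*d. f i) = (\<Sum>a<m. \<Sum>b<d. f (a*d+b))"
proof (induction m)
  case 0 then show ?case by simp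
next
  case (Suc m)
  have "(\<Sum>i<Suc m*d. f i) = (\<Sum>i<m*d. f i) + (\<Sum>i\<in>{m*d..<m*d+d}. f i)"
    by (simp add: add.commute sum.atLeastLessThan_concat[symmetric] lessThan_atLeast0)
  also have "(\<Sum>i\<in>{m*d..<m*d+d}. f i) = (\<Sum>b<d. f (m*d+b))"
  proof -
    have "{m*d..<m*d+d} = {0+m*d..<d+m*d}" by (simp add: add.commute)
    thus ?thesis using sum.shift_bounds_nat_ivl[of f 0 "m*d" d] by (simp add: lessThan_atLeast0 add.commute)
  qed
  finally show ?case using Suc by simp
qed

lemma sum_pair: "(\<Sum>i<(d::nat)*d. f i) = (\<Sum>a<d. \<Sum>b<d. f (a*d+b))"
  by (rule sum_pair_gen)

lemma geom_zero: assumes "(w::complex) ^ d = 1" "w \<noteq> 1" shows "(\<Sum>c<d. w ^ c) = 0"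
  using assms by (simp add: geometric_sum)

lemma pow_swap: "((x::'a::monoid_mult)^a)^d = (x^d)^a"
  by (simp add: power_mult[symmetric] mult.commute)

lemma zeta_ne_aux: assumes "b < a" "a < d" shows "(om d ^ 2) ^ a * cnj ((om d ^ 2) ^ b) \<noteq> 1"
proof
  assume h: "(om d ^ 2) ^ a * cnj ((om d ^ 2) ^ b) = 1"
  have "(om d ^ 2) ^ a * cnj ((om d ^ 2) ^ b) = (om d ^ 2) ^ (a - b) * ((om d ^ 2) ^ b * cnj ((om d ^ 2) ^ b))"
    using assms by (simp add: power_add[symmetric] mult.assoc)
  also have "(om d ^ 2) ^ b * cnj ((om d ^ 2) ^ b) = 1" using cnj_om_pow(2)[of d "2*b"] by (simp add: power_mult)
  finally show False using h assms zeta_pow_ne1[of "a-b" d] by simp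
qed

lemma zeta_eq: assumes "a < d" "b < d" "(om d ^ 2) ^ a * cnj ((om d ^ 2) ^ b) = 1" shows "a = b"
proof (rule ccontr)
  assume "a \<noteq> b"
  then consider "b < a" | "a < b" by linarith
  then show False
  proof cases
    case 1 then show False using zeta_ne_aux assms by blast
  next
    case 2
    have e2: "cnj ((om d ^ 2) ^ a * cnj ((om d ^ 2) ^ b)) = (om d ^ 2) ^ b * cnj ((om d ^ 2) ^ a)"
      by (simp only: complex_cnj_mult complex_cnj_cnj mult.commute)
    have e1: "cnj ((om d ^ 2) ^ a * cnj ((om d ^ 2) ^ b)) = 1"
      using arg_cong[OF assms(3), of cnj] by (simp only: complex_cnj_one)
    have "(om d ^ 2) ^ b * cnj ((om d ^ 2) ^ a) = 1" using e1 e2 by simp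
    then show False using zeta_ne_aux[of a b d] 2 assms by blast
  qed
qed

lemma orth: assumes "a < d" "b < d"
  shows "(\<Sum>c<d. ((om d ^ 2) ^ a * cnj ((om d ^ 2) ^ b)) ^ c) = (if a = b then of_nat d else 0)"
proof (cases "a = b")
  case True
  have "(om d ^ 2) ^ a * cnj ((om d ^ 2) ^ a) = 1" using cnj_om_pow(2)[of d "2*a"] by (simp add: power_mult)
  then show ?thesis using True by simp
next
  case False
  have d: "d > 0" using assms by simp
  have "((om d ^ 2) ^ a * cnj ((om d ^ 2) ^ b)) ^ d = ((om d ^ 2) ^ d) ^ a * cnj (((om d ^ 2) ^ d) ^ b)"
    by (simp only: power_mult_distrib complex_cnj_power pow_swap)
  also have "\<dots> = 1" using zeta_pow_d[OF d] by simp
  finally show ?thesis using geom_zero zeta_eq[OF assms] False by auto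
qed

lemma sum_zeta: assumes "0 < k" "k < d" shows "(\<Sum>c<d. ((om d ^ 2) ^ k) ^ c) = 0"
proof -
  have d: "d > 0" using assms by simp
  have "((om d ^ 2) ^ k) ^ d = ((om d ^ 2) ^ d) ^ k" by (rule pow_swap)
  also have "\<dots> = 1" using zeta_pow_d[OF d] by simp
  finally show ?thesis using geom_zero zeta_pow_ne1[OF assms] by auto
qed

lemma adj_index[simp]: "i < dim_col A \<Longrightarrow> j < dim_row A \<Longrightarrow> mat_adjoint A $$ (i,j) = cnj (A $$ (j,i))"
  "dim_row (mat_adjoint A) = dim_col A" "dim_col (mat_adjoint A) = dim_row A"
  unfolding mat_adjoint_def by (auto simp: mat_of_rows_def)

lemma mult3_index: assumes "A \<in> carrier_mat d d" "B \<in> carrier_mat d d" "C \<in> carrier_mat d d" "a < d" "b < d"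
  shows "(A * B * C) $$ (a,b) = (\<Sum>q<d. (\<Sum>p<d. A $$ (a,p) * B $$ (p,q)) * C $$ (q,b))"
  using assms apply (simp add: scalar_prod_def lessThan_atLeast0 sum_distrib_left sum_distrib_right mult.assoc)
  by (rule sum.swap)

abbreviation "c2 \<equiv> complex_of_real (1 / sqrt 2)"

lemma c2_sq[simp]: "c2 * c2 = 1/2" "cnj c2 = c2"
proof -
  have "c2 * c2 = complex_of_real ((1 / sqrt 2) * (1 / sqrt 2))" by (simp only: of_real_mult)
  also have "(1 / sqrt 2) * (1 / sqrt 2) = (1/2::real)" by simp
  finally show "c2 * c2 = 1/2" by simp
  show "cnj c2 = c2" by simp
qed

lemma kraus_lt: "j < d \<Longrightarrow> kraus d j = mat d d (\<lambda>(a,b). if a = j \<and> b = Suc j mod d then c2 else 0)"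
  unfolding kraus_def ketbra_def by (rule eq_matI, auto)

lemma kraus_d: "kraus d d = mat d d (\<lambda>(a,b). if a = b then c2 * om d ^ a else 0)"
  unfolding kraus_def exp_om by (rule eq_matI, auto)

lemma kraus_carrier[simp]: "kraus d j \<in> carrier_mat d d"
  unfolding kraus_def ketbra_def by auto

lemma sum_delta_mult: "(k::nat) < d \<Longrightarrow> (\<Sum>p<d. (if P \<and> p = k then (c::complex) else 0) * f p) = (if P then c * f k else 0)"
  by (cases P) (simp_all add: if_distrib[of "\<lambda>x. x * f _"] cong: if_cong)

lemma sum_delta_mult2: "(k::nat) < d \<Longrightarrow> (\<Sum>p<d. f p * (if P \<and> p = k then (c::complex) else 0)) = (if P then f k * c else 0)"
  by (cases P) (simp_all add: if_distrib[of "\<lambda>x. f _ * x"] cong: if_cong)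

lemma sum_delta_gen: "(k::nat) < d \<Longrightarrow> (\<Sum>p<d. if P \<and> p = k then (g p::complex) else 0) = (if P then g k else 0)"
  by (cases P) simp_all

lemma kraus_dims[simp]: "dim_row (kraus d j) = d" "dim_col (kraus d j) = d"
  unfolding kraus_def ketbra_def by auto
lemma adj_kraus_carrier[simp]: "mat_adjoint (kraus d j) \<in> carrier_mat d d"
  by (rule carrier_matI) (simp_all only: adj_index kraus_dims)

lemma kraus_term_lt: assumes "\<rho> \<in> carrier_mat d d" "a < d" "b < d" "j < d"
  shows "(kraus d j * \<rho> * mat_adjoint (kraus d j)) $$ (a,b) =
    (if b = a \<and> j = a then \<rho> $$ (Suc j mod d, Suc j mod d) / 2 else 0)"
proof -
  define j' where "j' = Suc j mod d"
  have j: "j' < d" using assms unfolding j'_def by simp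
  have ma: "mat_adjoint (kraus d j) \<in> carrier_mat d d" by (rule adj_kraus_carrier)
  have inner: "(\<Sum>p<d. kraus d j $$ (a,p) * \<rho> $$ (p,q)) = (if a = j then c2 * \<rho> $$ (j',q) else 0)" for q
  proof -
    have "(\<Sum>p<d. kraus d j $$ (a,p) * \<rho> $$ (p,q)) = (\<Sum>p<d. (if a = j \<and> p = j' then c2 else 0) * \<rho> $$ (p,q))"
      by (rule sum.cong) (auto simp: kraus_lt assms j'_def)
    also have "\<dots> = (if a = j then c2 * \<rho> $$ (j',q) else 0)" by (rule sum_delta_mult[OF j])
    finally show ?thesis .
  qed
  have adj: "q < d \<Longrightarrow> mat_adjoint (kraus d j) $$ (q,b) = (if b = j \<and> q = j' then c2 else 0)" for q
    using assms by (simp add: kraus_lt j'_def)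
  have "(kraus d j * \<rho> * mat_adjoint (kraus d j)) $$ (a,b) =
     (\<Sum>q<d. (if a = j then c2 * \<rho> $$ (j',q) else 0) * (if b = j \<and> q = j' then c2 else 0))"
    unfolding mult3_index[OF kraus_carrier assms(1) ma assms(2,3)] inner
    by (rule sum.cong) (auto simp: adj)
  also have "\<dots> = (if b = j then (if a = j then c2 * \<rho> $$ (j',j') else 0) * c2 else 0)"
    by (rule sum_delta_mult2[OF j])
  also have "\<dots> = (if b = a \<and> j = a then \<rho> $$ (j', j') / 2 else 0)"
  proof -
    have "c2 * x * c2 = x / 2" for x :: complex
    proof -
      have "c2 * x * c2 = (c2 * c2) * x" by (simp only: ac_simps)
      also have "\<dots> = (1/2) * x" by (simp only: c2_sq)
      finally show ?thesis by simp
    qed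
    thus ?thesis by (cases "b = j"; cases "a = j") simp_all
  qed
  finally show ?thesis unfolding j'_def .
qed

lemma kraus_term_d: assumes "\<rho> \<in> carrier_mat d d" "a < d" "b < d"
  shows "(kraus d d * \<rho> * mat_adjoint (kraus d d)) $$ (a,b) =
    om d ^ a * cnj (om d ^ b) * \<rho> $$ (a,b) / 2"
proof -
  have ma: "mat_adjoint (kraus d d) \<in> carrier_mat d d" by (rule adj_kraus_carrier)
  have inner: "(\<Sum>p<d. kraus d d $$ (a,p) * \<rho> $$ (p,q)) = c2 * om d ^ a * \<rho> $$ (a,q)" for q
  proof -
    have "(\<Sum>p<d. kraus d d $$ (a,p) * \<rho> $$ (p,q)) = (\<Sum>p<d. (if True \<and> p = a then c2 * om d ^ a else 0) * \<rho> $$ (p,q))"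
      by (rule sum.cong) (auto simp: kraus_d assms)
    also have "\<dots> = c2 * om d ^ a * \<rho> $$ (a,q)"
      using sum_delta_mult[OF assms(2), of True "c2 * om d ^ a" "\<lambda>p. \<rho> $$ (p,q)"] by simp
    finally show ?thesis .
  qed
  have adj: "q < d \<Longrightarrow> mat_adjoint (kraus d d) $$ (q,b) = (if True \<and> q = b then c2 * cnj (om d ^ b) else 0)" for q
    using assms by (auto simp: kraus_d)
  have "(kraus d d * \<rho> * mat_adjoint (kraus d d)) $$ (a,b) =
     (\<Sum>q<d. (c2 * om d ^ a * \<rho> $$ (a,q)) * (if True \<and> q = b then c2 * cnj (om d ^ b) else 0))"
    unfolding mult3_index[OF kraus_carrier assms(1) ma assms(2,3)] inner
    by (rule sum.cong) (auto simp: adj)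
  also have "\<dots> = (c2 * om d ^ a * \<rho> $$ (a,b)) * (c2 * cnj (om d ^ b))"
    using sum_delta_mult2[OF assms(3), of "\<lambda>q. c2 * om d ^ a * \<rho> $$ (a,q)" True "c2 * cnj (om d ^ b)"] by simp
  also have "\<dots> = (c2 * c2) * (om d ^ a * cnj (om d ^ b) * \<rho> $$ (a,b))" by (simp only: ac_simps)
  also have "\<dots> = (1/2) * (om d ^ a * cnj (om d ^ b) * \<rho> $$ (a,b))" by (simp only: c2_sq)
  also have "\<dots> = om d ^ a * cnj (om d ^ b) * \<rho> $$ (a,b) / 2" by simp
  finally show ?thesis .
qed

lemma exT_carrier[simp]: "exT d \<rho> \<in> carrier_mat d d"
  unfolding exT_def by simp

lemma exT_index: assumes "\<rho> \<in> carrier_mat d d" "a < d" "b < d"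
  shows "exT d \<rho> $$ (a,b) = (if a = b then \<rho> $$ (Suc a mod d, Suc a mod d) / 2 else 0)
     + om d ^ a * cnj (om d ^ b) * \<rho> $$ (a,b) / 2"
proof -
  have "exT d \<rho> $$ (a,b) = (\<Sum>j\<in>{0..d}. (kraus d j * \<rho> * mat_adjoint (kraus d j)) $$ (a,b))"
    unfolding exT_def using assms by simp
  also have "{0..d} = insert d {..<d}" by auto
  also have "(\<Sum>j\<in>insert d {..<d}. (kraus d j * \<rho> * mat_adjoint (kraus d j)) $$ (a,b))
     = (kraus d d * \<rho> * mat_adjoint (kraus d d)) $$ (a,b) + (\<Sum>j<d. (kraus d j * \<rho> * mat_adjoint (kraus d j)) $$ (a,b))"
    by simp
  also have "(\<Sum>j<d. (kraus d j * \<rho> * mat_adjoint (kraus d j)) $$ (a,b)) =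
     (\<Sum>j<d. if b = a \<and> j = a then \<rho> $$ (Suc j mod d, Suc j mod d) / 2 else 0)"
    apply (rule sum.cong[OF refl])
    apply (subst kraus_term_lt[OF assms(1,2,3)])
    by auto
  also have "\<dots> = (if b = a then \<rho> $$ (Suc a mod d, Suc a mod d) / 2 else 0)"
    by (rule sum_delta_gen[OF assms(2)])
  finally have "exT d \<rho> $$ (a,b) = (if b = a then \<rho> $$ (Suc a mod d, Suc a mod d) / 2 else 0) + om d ^ a * cnj (om d ^ b) * \<rho> $$ (a,b) / 2"
    unfolding kraus_term_d[OF assms] by (simp only: add.commute)
  thus ?thesis by (cases "a = b") simp_all
qed


lemma sum_rot: assumes "d > 0" shows "(\<Sum>a<d. f (Suc a mod d)) = (\<Sum>a<d. (f a :: complex))"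
proof -
  obtain m where m: "d = Suc m" using assms by (cases d) auto
  have "(\<Sum>a<Suc m. f (Suc a mod Suc m)) = (\<Sum>a<m. f (Suc a mod Suc m)) + f (Suc m mod Suc m)"
    by simp
  also have "(\<Sum>a<m. f (Suc a mod Suc m)) = (\<Sum>a<m. f (Suc a))"
    by (rule sum.cong) auto
  also have "(\<Sum>a<m. f (Suc a)) + f (Suc m mod Suc m) = (\<Sum>a<Suc m. f a)"
    unfolding sum.lessThan_Suc_shift by simp
  finally show ?thesis using m by simp
qed

lemma exT_dims[simp]: "dim_row (exT d \<rho>) = d" "dim_col (exT d \<rho>) = d"
  unfolding exT_def by simp_all

lemma om_cnj_pow[simp]: "om d ^ k * cnj (om d) ^ k = 1" "cnj (om d) ^ k * om d ^ k = 1"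
  using cnj_om_pow[of d k] by (simp_all add: complex_cnj_power)

lemma exT_tp: assumes "d > 0" shows "trace_preserving d (exT d)"
  unfolding trace_preserving_def
proof
  fix X :: "complex mat" assume X: "X \<in> carrier_mat d d"
  have "mtrace (exT d X) = (\<Sum>a<d. exT d X $$ (a,a))" unfolding mtrace_def by simp
  also have "\<dots> = (\<Sum>a<d. X $$ (Suc a mod d, Suc a mod d) / 2 + X $$ (a,a) / 2)"
    by (rule sum.cong[OF refl]) (simp add: exT_index[OF X])
  also have "\<dots> = (\<Sum>a<d. X $$ (Suc a mod d, Suc a mod d)) / 2 + (\<Sum>a<d. X $$ (a,a)) / 2"
    by (simp add: sum.distrib sum_divide_distrib)
  also have "(\<Sum>a<d. X $$ (Suc a mod d, Suc a mod d)) = (\<Sum>a<d. X $$ (a,a))"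
    by (rule sum_rot[OF assms, of "\<lambda>a. X $$ (a,a)"])
  also have "(\<Sum>a<d. X $$ (a,a)) / 2 + (\<Sum>a<d. X $$ (a,a)) / 2 = mtrace X"
    unfolding mtrace_def using X by simp
  finally show "mtrace (exT d X) = mtrace X" .
qed

lemma exT_unital: "unital d (exT d)"
  unfolding unital_def
  by (rule eq_matI) (auto simp: exT_index)

lemma collapse: assumes "\<forall>A<M. g A < (N::nat)"
  shows "(\<Sum>C<N. (\<Sum>A<M. if g A = C then h A else 0) * k C) = (\<Sum>A<(M::nat). h A * (k (g A) :: complex))"
proof -
  have "(\<Sum>C<N. (\<Sum>A<M. if g A = C then h A else 0) * k C) = (\<Sum>C<N. \<Sum>A<M. if g A = C then h A * k C else 0)"
    by (simp add: sum_distrib_right if_distrib[of "\<lambda>x. x * k _"] cong: if_cong)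
  also have "\<dots> = (\<Sum>A<M. \<Sum>C<N. if g A = C then h A * k C else 0)" by (rule sum.swap)
  also have "\<dots> = (\<Sum>A<M. h A * k (g A))"
    by (rule sum.cong[OF refl]) (use assms in auto)
  finally show ?thesis .
qed

lemma psd_quad: fixes M :: nat assumes X: "psd N X" and g: "\<forall>A<M. g A < N"
  shows "0 \<le> (\<Sum>A<M. \<Sum>B<M. cnj (f A) * X $$ (g A, g B) * f B)"
proof -
  define u where "u = vec N (\<lambda>C. \<Sum>A<M. if g A = C then f A else 0)"
  have u: "u \<in> carrier_vec N" unfolding u_def by simp
  have XC: "X \<in> carrier_mat N N" using X unfolding psd_def by auto
  have "0 \<le> conjugate u \<bullet> (X *\<^sub>v u)" using X u unfolding psd_def by auto
  also have "conjugate u \<bullet> (X *\<^sub>v u) = (\<Sum>C<N. cnj (u $ C) * (\<Sum>D<N. X $$ (C,D) * u $ D))"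
    using XC u by (simp add: scalar_prod_def lessThan_atLeast0)
  also have "\<dots> = (\<Sum>C<N. (\<Sum>A<M. if g A = C then cnj (f A) else 0) * (\<Sum>D<N. X $$ (C,D) * u $ D))"
    by (rule sum.cong[OF refl]) (simp add: u_def cnj_sum if_distrib[of cnj] cong: if_cong)
  also have "\<dots> = (\<Sum>A<M. cnj (f A) * (\<Sum>D<N. X $$ (g A,D) * u $ D))"
    by (rule collapse[OF g])
  also have "\<dots> = (\<Sum>A<M. cnj (f A) * (\<Sum>B<M. f B * X $$ (g A, g B)))"
  proof (rule sum.cong[OF refl])
    fix A assume "A \<in> {..<M}"
    have "(\<Sum>D<N. X $$ (g A,D) * u $ D) = (\<Sum>D<N. (\<Sum>B<M. if g B = D then f B else 0) * X $$ (g A,D))"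
      by (rule sum.cong[OF refl]) (simp add: u_def mult.commute)
    also have "\<dots> = (\<Sum>B<M. f B * X $$ (g A, g B))" by (rule collapse[OF g])
    finally show "cnj (f A) * (\<Sum>D<N. X $$ (g A,D) * u $ D) = cnj (f A) * (\<Sum>B<M. f B * X $$ (g A, g B))" by simp
  qed
  also have "\<dots> = (\<Sum>A<M. \<Sum>B<M. cnj (f A) * X $$ (g A, g B) * f B)"
    by (simp add: sum_distrib_left ac_simps)
  finally show ?thesis .
qed

lemma sum_two_delta: assumes "(a::nat) < d"
  shows "(\<Sum>r<d. (if a = r then x else 0) * Y * (if b = r then z else 0)) = (if a = b then x * Y * (z::complex) else 0)"
proof -
  have "(\<Sum>r<d. (if a = r then x else 0) * Y * (if b = r then z else 0)) = (\<Sum>r<d. if r = a then (if a = b then x * Y * z else 0) else 0)"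
    by (rule sum.cong[OF refl]) auto
  also have "\<dots> = (if a = b then x * Y * z else 0)" using assms by simp
  finally show ?thesis .
qed

lemma half_nonneg: "0 \<le> (a::complex) \<Longrightarrow> 0 \<le> b \<Longrightarrow> 0 \<le> a / 2 + b / 2"
  by (simp add: less_eq_complex_def)

lemma exT_cp: assumes d: "d > 0" shows "completely_positive d (exT d)"
  unfolding completely_positive_def
proof (intro allI impI)
  fix n X assume X: "psd (n*d) X"
  have XC: "X \<in> carrier_mat (n*d) (n*d)" using X unfolding psd_def by auto
  define M where "M = ampliation n d (exT d) X"
  define \<sigma> where "\<sigma> A = (A div d)*d + Suc (A mod d) mod d" for A
  have \<sigma>: "\<forall>A<n*d. \<sigma> A < n*d"
  proof (intro allI impI)
    fix A assume A: "A < n*d"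
    have "A div d < n" using A d by (simp add: div_less_iff_less_mult)
    hence "Suc (A div d) * d \<le> n * d" by (intro mult_le_mono1) simp
    moreover have "Suc (A mod d) mod d < d" using d by simp
    ultimately show "\<sigma> A < n*d" unfolding \<sigma>_def by simp
  qed
  have Mij: "M $$ (A,B) = (if A mod d = B mod d then X $$ (\<sigma> A, \<sigma> B) / 2 else 0)
     + om d ^ (A mod d) * cnj (om d ^ (B mod d)) * X $$ (A,B) / 2" if A: "A < n*d" and B: "B < n*d" for A B
  proof -
    define blk where "blk = mat d d (\<lambda>(p, q). X $$ ((A div d) * d + p, (B div d) * d + q))"
    have blk: "blk \<in> carrier_mat d d" unfolding blk_def by simp
    have am: "A mod d < d" "B mod d < d" "Suc (A mod d) mod d < d" using d by auto
    have "M $$ (A,B) = exT d blk $$ (A mod d, B mod d)"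
      unfolding M_def ampliation_def blk_def using A B by simp
    also have "\<dots> = (if A mod d = B mod d then blk $$ (Suc (A mod d) mod d, Suc (A mod d) mod d) / 2 else 0)
     + om d ^ (A mod d) * cnj (om d ^ (B mod d)) * blk $$ (A mod d, B mod d) / 2"
      by (rule exT_index[OF blk am(1,2)])
    also have "blk $$ (A mod d, B mod d) = X $$ (A, B)"
      unfolding blk_def using am by simp
    also have "(if A mod d = B mod d then blk $$ (Suc (A mod d) mod d, Suc (A mod d) mod d) / 2 else 0)
       = (if A mod d = B mod d then X $$ (\<sigma> A, \<sigma> B) / 2 else 0)"
      unfolding blk_def \<sigma>_def using am by auto
    finally show ?thesis .
  qed
  show "psd (n*d) (ampliation n d (exT d) X)" unfolding psd_def M_def[symmetric]
  proof (intro conjI ballI)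
    show "M \<in> carrier_mat (n*d) (n*d)" unfolding M_def ampliation_def by simp
    fix v :: "complex vec" assume v: "v \<in> carrier_vec (n*d)"
    define fr where "fr r A = (if A mod d = r then v $ A else 0)" for r A
    define f2 where "f2 A = cnj (om d ^ (A mod d)) * v $ A" for A
    define Q1 where "Q1 r = (\<Sum>A<n*d. \<Sum>B<n*d. cnj (fr r A) * X $$ (\<sigma> A, \<sigma> B) * fr r B)" for r
    define Q2 where "Q2 = (\<Sum>A<n*d. \<Sum>B<n*d. cnj (f2 A) * X $$ ((\<lambda>A. A) A, (\<lambda>A. A) B) * f2 B)"
    have Mdim: "dim_row M = n*d" "dim_col M = n*d" unfolding M_def ampliation_def by simp_all
    have "conjugate v \<bullet> (M *\<^sub>v v) = (\<Sum>A<n*d. cnj (v $ A) * (\<Sum>B<n*d. M $$ (A,B) * v $ B))"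
      using v Mdim by (simp add: scalar_prod_def lessThan_atLeast0)
    also have "\<dots> = (\<Sum>A<n*d. \<Sum>B<n*d. (\<Sum>r<d. cnj (fr r A) * X $$ (\<sigma> A, \<sigma> B) * fr r B) / 2
        + cnj (f2 A) * X $$ (A, B) * f2 B / 2)"
    proof (rule sum.cong[OF refl])
      fix A assume A: "A \<in> {..<n*d}"
      show "cnj (v $ A) * (\<Sum>B<n*d. M $$ (A,B) * v $ B) = (\<Sum>B<n*d. (\<Sum>r<d. cnj (fr r A) * X $$ (\<sigma> A, \<sigma> B) * fr r B) / 2
        + cnj (f2 A) * X $$ (A, B) * f2 B / 2)"
        unfolding sum_distrib_left
      proof (rule sum.cong[OF refl])
        fix B assume B: "B \<in> {..<n*d}"
        have am: "A mod d < d" using d by simp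
        have "(\<Sum>r<d. cnj (fr r A) * X $$ (\<sigma> A, \<sigma> B) * fr r B)
          = (\<Sum>r<d. (if A mod d = r then cnj (v $ A) else 0) * X $$ (\<sigma> A, \<sigma> B) * (if B mod d = r then v $ B else 0))"
          unfolding fr_def by (rule sum.cong[OF refl]) auto
        also have "\<dots> = (if A mod d = B mod d then cnj (v $ A) * X $$ (\<sigma> A, \<sigma> B) * v $ B else 0)"
          by (rule sum_two_delta[OF am])
        finally have e1: "(\<Sum>r<d. cnj (fr r A) * X $$ (\<sigma> A, \<sigma> B) * fr r B)
          = (if A mod d = B mod d then cnj (v $ A) * X $$ (\<sigma> A, \<sigma> B) * v $ B else 0)" .
        have e2: "cnj (f2 A) * X $$ (A, B) * f2 B = om d ^ (A mod d) * cnj (om d ^ (B mod d)) * (cnj (v $ A) * X $$ (A, B) * v $ B)"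
          unfolding f2_def by (simp add: ac_simps)
        show "cnj (v $ A) * (M $$ (A,B) * v $ B) = (\<Sum>r<d. cnj (fr r A) * X $$ (\<sigma> A, \<sigma> B) * fr r B) / 2
          + cnj (f2 A) * X $$ (A, B) * f2 B / 2"
          unfolding e1 e2 Mij[OF A[simplified] B[simplified]] by (simp add: algebra_simps)
      qed
    qed
    also have "\<dots> = (\<Sum>r<d. Q1 r) / 2 + Q2 / 2"
    proof -
      have "(\<Sum>A<n*d. \<Sum>B<n*d. (\<Sum>r<d. cnj (fr r A) * X $$ (\<sigma> A, \<sigma> B) * fr r B) / 2
        + cnj (f2 A) * X $$ (A, B) * f2 B / 2) = 
        (\<Sum>A<n*d. \<Sum>B<n*d. \<Sum>r<d. cnj (fr r A) * X $$ (\<sigma> A, \<sigma> B) * fr r B) / 2 + Q2 / 2"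
        unfolding Q2_def by (simp add: sum.distrib sum_divide_distrib)
      also have "(\<Sum>A<n*d. \<Sum>B<n*d. \<Sum>r<d. cnj (fr r A) * X $$ (\<sigma> A, \<sigma> B) * fr r B)
         = (\<Sum>A<n*d. \<Sum>r<d. \<Sum>B<n*d. cnj (fr r A) * X $$ (\<sigma> A, \<sigma> B) * fr r B)"
        by (rule sum.cong[OF refl]) (rule sum.swap)
      also have "\<dots> = (\<Sum>r<d. Q1 r)" unfolding Q1_def by (rule sum.swap)
      finally show ?thesis .
    qed
    finally have eq: "conjugate v \<bullet> (M *\<^sub>v v) = (\<Sum>r<d. Q1 r) / 2 + Q2 / 2" .
    have "0 \<le> Q1 r" for r unfolding Q1_def by (rule psd_quad[OF X \<sigma>])
    hence "0 \<le> (\<Sum>r<d. Q1 r)" by (simp add: sum_nonneg)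
    moreover have "0 \<le> Q2" unfolding Q2_def by (rule psd_quad[OF X]) simp
    ultimately show "0 \<le> conjugate v \<bullet> (M *\<^sub>v v)" unfolding eq by (rule half_nonneg)
  qed
qed


definition isd :: "nat \<Rightarrow> nat \<Rightarrow> bool" where "isd d i = (i div d = i mod d)"
definition dg :: "nat \<Rightarrow> nat \<Rightarrow> nat" where "dg d x = x * d + x"

definition Sm :: "nat \<Rightarrow> complex mat" where
  "Sm d = mat (d*d) (d*d) (\<lambda>(i,j). if isd d i \<and> isd d j then ((om d ^ 2) ^ (i mod d)) ^ (j mod d)
     else if i = j then 1 else 0)"
definition Si :: "nat \<Rightarrow> complex mat" where
  "Si d = mat (d*d) (d*d) (\<lambda>(i,j). if isd d i \<and> isd d j then cnj (((om d ^ 2) ^ (j mod d)) ^ (i mod d)) / of_nat d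
     else if i = j then 1 else 0)"
definition mu :: "nat \<Rightarrow> nat \<Rightarrow> complex" where
  "mu d i = (if isd d i then (1 + (om d ^ 2) ^ (i mod d)) / 2 else om d ^ (i div d) * cnj (om d ^ (i mod d)) / 2)"
definition Lm :: "nat \<Rightarrow> complex mat" where
  "Lm d = mat (d*d) (d*d) (\<lambda>(i,j). if i = j then mu d i else 0)"

lemma lt_sq: "a < d \<Longrightarrow> b < d \<Longrightarrow> a * d + b < d * (d::nat)"
proof -
  assume "a < d" "b < d"
  hence "a * d + b < a * d + d" by simp
  also have "\<dots> = Suc a * d" by simp
  also have "\<dots> \<le> d * d" using \<open>a < d\<close> by (intro mult_le_mono1) simp
  finally show ?thesis .
qed

lemma idx_bounds: "i < d * (d::nat) \<Longrightarrow> i div d < d" "i < d * d \<Longrightarrow> i mod d < d"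
  by (auto simp: less_mult_imp_div_less) (metis mod_less_divisor mult_0_right neq0_conv not_less0)

lemma idx_eq: "y < (d::nat) \<Longrightarrow> (k = x * d + y) = (k div d = x \<and> k mod d = y)"
  by (metis div_mult_mod_eq divmod_simps(1) divmod_simps(2))

lemma idx_eq2: "((i::nat) = k) = (i div d = k div d \<and> i mod d = k mod d)"
  by (metis div_mult_mod_eq)

lemma dg_lt: "x < d \<Longrightarrow> dg d x < d * d" unfolding dg_def by (rule lt_sq)
lemma isd_dg: "x < d \<Longrightarrow> isd d (dg d x)" unfolding dg_def isd_def by simp
lemma dg_mod: "x < d \<Longrightarrow> dg d x mod d = x" unfolding dg_def by simp
lemma dg_div: "x < d \<Longrightarrow> dg d x div d = x" unfolding dg_def by simp

lemma mat_rep_index: assumes d: "d > 0" and i: "i < d*d" and k: "k < d*d"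
  shows "mat_rep d (exT d) $$ (i,k) = (if isd d i \<and> k = dg d (Suc (i mod d) mod d) then 1/2 else 0)
     + (if k = i then om d ^ (i div d) * cnj (om d ^ (i mod d)) / 2 else 0)"
proof -
  have b: "i div d < d" "i mod d < d" "k div d < d" "k mod d < d" "Suc (i mod d) mod d < d"
    using idx_bounds i k d by auto
  have kb: "ketbra d (k div d) (k mod d) \<in> carrier_mat d d" unfolding ketbra_def by simp
  have "mat_rep d (exT d) $$ (i,k) = exT d (ketbra d (k div d) (k mod d)) $$ (i div d, i mod d)"
    unfolding mat_rep_def using i k by simp
  also have "\<dots> = (if i div d = i mod d then ketbra d (k div d) (k mod d) $$ (Suc (i div d) mod d, Suc (i div d) mod d) / 2 else 0)
     + om d ^ (i div d) * cnj (om d ^ (i mod d)) * ketbra d (k div d) (k mod d) $$ (i div d, i mod d) / 2"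
    by (rule exT_index[OF kb b(1,2)])
  also have "ketbra d (k div d) (k mod d) $$ (i div d, i mod d) = (if k = i then 1 else 0)"
    unfolding ketbra_def using b idx_eq2[of i k d] by auto
  also have "(if i div d = i mod d then ketbra d (k div d) (k mod d) $$ (Suc (i div d) mod d, Suc (i div d) mod d) / 2 else 0)
     = (if isd d i \<and> k = dg d (Suc (i mod d) mod d) then 1/2 else 0)"
    unfolding ketbra_def isd_def dg_def using b idx_eq[OF b(5), of k "Suc (i mod d) mod d"] by auto
  finally show ?thesis by simp
qed

lemma sum_isd: assumes "d > 0" shows "(\<Sum>k<d*d. if isd d k then g (k mod d) else 0) = (\<Sum>y<d. (g y :: complex))"
proof -
  have "(\<Sum>k<d*d. if isd d k then g (k mod d) else 0) = (\<Sum>a<d. \<Sum>b<d. if isd d (a*d+b) then g ((a*d+b) mod d) else 0)"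
    by (rule sum_pair)
  also have "\<dots> = (\<Sum>a<d. \<Sum>b<d. if b = a then g a else 0)"
    by (intro sum.cong refl) (auto simp: isd_def)
  also have "\<dots> = (\<Sum>a<d. g a)" by simp
  finally show ?thesis .
qed

lemma Sm_carrier[simp]: "Sm d \<in> carrier_mat (d*d) (d*d)" unfolding Sm_def by simp
lemma Si_carrier[simp]: "Si d \<in> carrier_mat (d*d) (d*d)" unfolding Si_def by simp
lemma Lm_carrier[simp]: "Lm d \<in> carrier_mat (d*d) (d*d)" unfolding Lm_def by simp
lemma R_carrier[simp]: "mat_rep d (exT d) \<in> carrier_mat (d*d) (d*d)" unfolding mat_rep_def by simp

lemma dims_SL[simp]: "dim_row (Sm d) = d*d" "dim_col (Sm d) = d*d" "dim_row (Si d) = d*d" "dim_col (Si d) = d*d"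
  "dim_row (Lm d) = d*d" "dim_col (Lm d) = d*d" "dim_row (mat_rep d T) = d*d" "dim_col (mat_rep d T) = d*d"
  unfolding Sm_def Si_def Lm_def mat_rep_def by simp_all

lemma mult_index: "A \<in> carrier_mat n n \<Longrightarrow> B \<in> carrier_mat n n \<Longrightarrow> i < n \<Longrightarrow> j < n \<Longrightarrow>
   (A * B) $$ (i,j) = (\<Sum>k<n. A $$ (i,k) * B $$ (k,j))"
  by (simp add: scalar_prod_def lessThan_atLeast0)

lemma zeta_pow_exp: "((om d ^ 2) ^ b) ^ y * cnj (((om d ^ 2) ^ q) ^ y) = ((om d ^ 2) ^ b * cnj ((om d ^ 2) ^ q)) ^ y"
  by (simp add: power_mult_distrib complex_cnj_power)

lemma S_Si: assumes d: "d > 0" shows "Sm d * Si d = 1\<^sub>m (d*d)"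
proof (rule eq_matI)
  fix i j assume i: "i < dim_row (1\<^sub>m (d*d))" and j: "j < dim_col (1\<^sub>m (d*d))"
  hence i: "i < d*d" and j: "j < d*d" by auto
  have b: "i div d < d" "i mod d < d" "j div d < d" "j mod d < d" using idx_bounds i j by auto
  have "(Sm d * Si d) $$ (i,j) = (\<Sum>k<d*d. Sm d $$ (i,k) * Si d $$ (k,j))"
    by (rule mult_index[OF Sm_carrier Si_carrier i j])
  also have "\<dots> = (if i = j then 1 else 0)"
  proof (cases "isd d i")
    case False
    have "(\<Sum>k<d*d. Sm d $$ (i,k) * Si d $$ (k,j)) = (\<Sum>k<d*d. if k = i then Si d $$ (i,j) else 0)"
      by (rule sum.cong[OF refl]) (auto simp: Sm_def False i)
    also have "\<dots> = (if i = j then 1 else 0)" using i j False by (simp add: Si_def)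
    finally show ?thesis .
  next
    case True note ti = True
    show ?thesis
    proof (cases "isd d j")
      case False
      have "(\<Sum>k<d*d. Sm d $$ (i,k) * Si d $$ (k,j)) = (\<Sum>k<d*d. if k = j then Sm d $$ (i,j) else 0)"
        by (rule sum.cong[OF refl]) (auto simp: Si_def False j)
      also have "\<dots> = (if i = j then 1 else 0)" using i j False ti by (auto simp: Sm_def)
      finally show ?thesis .
    next
      case True
      have "(\<Sum>k<d*d. Sm d $$ (i,k) * Si d $$ (k,j)) = (\<Sum>k<d*d. if isd d k then
           ((om d ^ 2) ^ (i mod d) * cnj ((om d ^ 2) ^ (j mod d))) ^ (k mod d) / of_nat d else 0)"
      proof (rule sum.cong[OF refl])
        fix k assume "k \<in> {..<d*d}"
        hence k: "k < d*d" by simp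
        show "Sm d $$ (i,k) * Si d $$ (k,j) = (if isd d k then
           ((om d ^ 2) ^ (i mod d) * cnj ((om d ^ 2) ^ (j mod d))) ^ (k mod d) / of_nat d else 0)"
        proof (cases "isd d k")
          case True
          then show ?thesis using ti \<open>isd d j\<close> i j k by (simp add: Sm_def Si_def zeta_pow_exp[symmetric] power_mult_distrib)
        next
          case False
          have "i \<noteq> k" using False ti by auto
          then show ?thesis using False ti i j k by (simp add: Sm_def Si_def)
        qed
      qed
      also have "\<dots> = (\<Sum>y<d. ((om d ^ 2) ^ (i mod d) * cnj ((om d ^ 2) ^ (j mod d))) ^ y / of_nat d)"
        by (rule sum_isd[OF d])
      also have "\<dots> = (\<Sum>y<d. ((om d ^ 2) ^ (i mod d) * cnj ((om d ^ 2) ^ (j mod d))) ^ y) / of_nat d"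
        by (simp add: sum_divide_distrib)
      also have "\<dots> = (if i mod d = j mod d then 1 else 0)"
        unfolding orth[OF b(2,4)] using d by simp
      also have "(i mod d = j mod d) = (i = j)" using ti True idx_eq2[of i j d] unfolding isd_def by auto
      finally show ?thesis .
    qed
  qed
  finally show "(Sm d * Si d) $$ (i,j) = 1\<^sub>m (d*d) $$ (i,j)" using i j by simp
qed (auto simp: Sm_def Si_def)

lemma zeta_mod: assumes "d > 0" shows "(om d ^ 2) ^ x = (om d ^ 2) ^ (x mod d)"
proof -
  have "(om d ^ 2) ^ x = (om d ^ 2) ^ (d * (x div d) + x mod d)" by simp
  also have "\<dots> = ((om d ^ 2) ^ d) ^ (x div d) * (om d ^ 2) ^ (x mod d)" by (simp only: power_add power_mult)
  finally show ?thesis using zeta_pow_d[OF assms] by simp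
qed

lemma zeta_shift: assumes "d > 0"
  shows "((om d ^ 2) ^ (Suc b mod d)) ^ q = ((om d ^ 2) ^ b) ^ q * (om d ^ 2) ^ q"
proof -
  have "((om d ^ 2) ^ (Suc b mod d)) ^ q = (om d ^ 2) ^ ((Suc b mod d) * q)" by (simp add: power_mult)
  also have "\<dots> = (om d ^ 2) ^ (((Suc b mod d) * q) mod d)" by (rule zeta_mod[OF assms])
  also have "((Suc b mod d) * q) mod d = (Suc b * q) mod d" by (simp add: mod_mult_left_eq)
  also have "(om d ^ 2) ^ ((Suc b * q) mod d) = (om d ^ 2) ^ (Suc b * q)" by (rule zeta_mod[OF assms, symmetric])
  also have "\<dots> = ((om d ^ 2) ^ b) ^ q * (om d ^ 2) ^ q" by (simp add: power_add power_mult)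
  finally show ?thesis .
qed

lemma sum_two_delta3: assumes "m < (n::nat)" "i < n"
  shows "(\<Sum>k<n. ((if P \<and> k = m then \<alpha> else 0) + (if k = i then \<beta> else 0)) * F k) = (if P then \<alpha> * F m else 0) + \<beta> * (F i :: complex)"
proof -
  have "(\<Sum>k<n. ((if P \<and> k = m then \<alpha> else 0) + (if k = i then \<beta> else 0)) * F k)
     = (\<Sum>k<n. if k = m then (if P then \<alpha> * F m else 0) else 0) + (\<Sum>k<n. if k = i then \<beta> * F i else 0)"
    unfolding sum.distrib[symmetric] by (rule sum.cong[OF refl]) (auto simp: distrib_right)
  also have "\<dots> = (if P then \<alpha> * F m else 0) + \<beta> * F i" using assms by simp
  finally show ?thesis .
qed

lemma R_S: assumes d: "d > 0" shows "mat_rep d (exT d) * Sm d = Sm d * Lm d"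
proof (rule eq_matI)
  fix i j assume i: "i < dim_row (Sm d * Lm d)" and j: "j < dim_col (Sm d * Lm d)"
  hence i: "i < d*d" and j: "j < d*d" by auto
  have b: "i div d < d" "i mod d < d" "j div d < d" "j mod d < d" "Suc (i mod d) mod d < d" using idx_bounds i j d by auto
  define s where "s = Suc (i mod d) mod d"
  define e where "e = om d ^ (i div d) * cnj (om d ^ (i mod d))"
  have sb: "s < d" "dg d s < d*d" using b dg_lt unfolding s_def by auto
  have "(mat_rep d (exT d) * Sm d) $$ (i,j) = (\<Sum>k<d*d. mat_rep d (exT d) $$ (i,k) * Sm d $$ (k,j))"
    by (rule mult_index[OF R_carrier Sm_carrier i j])
  also have "\<dots> = (\<Sum>k<d*d. ((if isd d i \<and> k = dg d s then 1/2 else 0) + (if k = i then e / 2 else 0)) * Sm d $$ (k,j))"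
    by (rule sum.cong[OF refl]) (simp add: mat_rep_index[OF d i] s_def e_def)
  also have "\<dots> = (if isd d i then 1/2 * Sm d $$ (dg d s, j) else 0) + e / 2 * Sm d $$ (i, j)"
    by (rule sum_two_delta3[OF sb(2) i])
  also have "\<dots> = Sm d $$ (i,j) * mu d j"
  proof (cases "isd d i")
    case False
    then show ?thesis using i j by (auto simp: Sm_def mu_def e_def isd_def)
  next
    case ti: True
    show ?thesis
    proof (cases "isd d j")
      case False
      have "dg d s \<noteq> j" using isd_dg[OF sb(1)] False by auto
      moreover have "i \<noteq> j" using ti False by auto
      ultimately show ?thesis using False ti i j sb by (simp add: Sm_def)
    next
      case True
      have e1: "e = 1" unfolding e_def using ti unfolding isd_def by simp
      have "Sm d $$ (dg d s, j) = ((om d ^ 2) ^ s) ^ (j mod d)"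
        using sb j True isd_dg[OF sb(1)] by (simp add: Sm_def dg_mod)
      also have "\<dots> = ((om d ^ 2) ^ (i mod d)) ^ (j mod d) * (om d ^ 2) ^ (j mod d)"
        unfolding s_def by (rule zeta_shift[OF d])
      finally have "Sm d $$ (dg d s, j) = ((om d ^ 2) ^ (i mod d)) ^ (j mod d) * (om d ^ 2) ^ (j mod d)" .
      then show ?thesis using ti True i j e1 by (simp add: Sm_def mu_def algebra_simps)
    qed
  qed
  also have "\<dots> = (\<Sum>k<d*d. Sm d $$ (i,k) * (if k = j then mu d j else 0))"
    using j by (simp add: if_distrib[of "\<lambda>x. _ * x"] cong: if_cong)
  also have "\<dots> = (\<Sum>k<d*d. Sm d $$ (i,k) * Lm d $$ (k,j))"
    by (rule sum.cong[OF refl]) (auto simp: Lm_def j)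
  also have "\<dots> = (Sm d * Lm d) $$ (i,j)"
    by (rule mult_index[OF Sm_carrier Lm_carrier i j, symmetric])
  finally show "(mat_rep d (exT d) * Sm d) $$ (i,j) = (Sm d * Lm d) $$ (i,j)" .
qed auto



lemma Si_S: assumes "d > 0" shows "Si d * Sm d = 1\<^sub>m (d*d)"
  by (rule mat_mult_left_right_inverse[OF Sm_carrier Si_carrier S_Si[OF assms]])

lemma R_eq: assumes d: "d > 0" shows "mat_rep d (exT d) = Sm d * Lm d * Si d"
proof -
  have "mat_rep d (exT d) = mat_rep d (exT d) * (Sm d * Si d)"
    using S_Si[OF d] by simp
  also have "\<dots> = mat_rep d (exT d) * Sm d * Si d"
    by (rule assoc_mult_mat[symmetric, OF R_carrier Sm_carrier Si_carrier])
  also have "\<dots> = Sm d * Lm d * Si d" using R_S[OF d] by simp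
  finally show ?thesis .
qed

lemma R_sim: assumes d: "d > 0" shows "similar_mat (mat_rep d (exT d)) (Lm d)"
  by (rule similar_matI[of _ _ "Sm d" "Si d" "d*d"]) (auto simp: S_Si[OF d] Si_S[OF d] R_eq[OF d])

lemma Lm_ut: "upper_triangular (Lm d)" unfolding upper_triangular_def Lm_def by auto

lemma diag_Lm: "diag_mat (Lm d) = map (mu d) [0..<d*d]"
  unfolding diag_mat_def by (auto simp: Lm_def)

lemma char_R: assumes d: "d > 0" shows "char_poly (mat_rep d (exT d)) = (\<Prod>a \<leftarrow> map (mu d) [0..<d*d]. [:- a, 1:])"
  unfolding char_poly_similar[OF R_sim[OF d]] char_poly_upper_triangular[OF Lm_carrier Lm_ut] diag_Lm ..

lemma mtrace_comm: assumes "A \<in> carrier_mat n n" "B \<in> carrier_mat n n" shows "mtrace (A * B) = mtrace (B * A)"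
proof -
  have "mtrace (A * B) = (\<Sum>i<n. \<Sum>k<n. A $$ (i,k) * B $$ (k,i))"
    unfolding mtrace_def using assms by (simp add: scalar_prod_def lessThan_atLeast0)
  also have "\<dots> = (\<Sum>k<n. \<Sum>i<n. B $$ (k,i) * A $$ (i,k))" by (subst sum.swap) (simp add: mult.commute)
  also have "\<dots> = mtrace (B * A)"
    unfolding mtrace_def using assms by (simp add: scalar_prod_def lessThan_atLeast0)
  finally show ?thesis .
qed

lemma trace_R: assumes d: "d > 0" shows "mtrace (mat_rep d (exT d)) = (\<Sum>i<d*d. mu d i)"
proof -
  have "mtrace (mat_rep d (exT d)) = mtrace (Sm d * Lm d * Si d)" using R_eq[OF d] by simp
  also have "\<dots> = mtrace (Si d * (Sm d * Lm d))" by (rule mtrace_comm[of _ "d*d"]) auto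
  also have "Si d * (Sm d * Lm d) = Si d * Sm d * Lm d" by (rule assoc_mult_mat[symmetric, OF Si_carrier Sm_carrier Lm_carrier])
  also have "\<dots> = Lm d" using Si_S[OF d] by simp
  also have "mtrace (Lm d) = (\<Sum>i<d*d. mu d i)" unfolding mtrace_def by (simp add: Lm_def)
  finally show ?thesis .
qed

lemma trace_R2: assumes d: "d > 0" shows "mtrace (mat_rep d (exT d) * mat_rep d (exT d)) = (\<Sum>i<d*d. mu d i ^ 2)"
proof -
  let ?S = "Sm d" and ?L = "Lm d" and ?I = "Si d"
  have c: "?S \<in> carrier_mat (d*d) (d*d)" "?L \<in> carrier_mat (d*d) (d*d)" "?I \<in> carrier_mat (d*d) (d*d)" by auto
  let ?R = "mat_rep d (exT d)"
  have SL: "?S * ?L \<in> carrier_mat (d*d) (d*d)" by auto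
  have "?R * ?R = ?R * (?S * ?L * ?I)" by (simp only: R_eq[OF d])
  also have "\<dots> = ?R * (?S * ?L) * ?I" by (rule assoc_mult_mat[symmetric, OF R_carrier SL Si_carrier])
  also have "?R * (?S * ?L) = ?R * ?S * ?L" by (rule assoc_mult_mat[symmetric, OF R_carrier Sm_carrier Lm_carrier])
  also have "\<dots> = ?S * ?L * ?L" by (simp only: R_S[OF d])
  also have "\<dots> = ?S * (?L * ?L)" by (rule assoc_mult_mat[OF Sm_carrier Lm_carrier Lm_carrier])
  finally have e: "mat_rep d (exT d) * mat_rep d (exT d) = ?S * (?L * ?L) * ?I" .
  have "mtrace (?S * (?L * ?L) * ?I) = mtrace (?I * (?S * (?L * ?L)))" by (rule mtrace_comm[of _ "d*d"]) auto
  also have "?I * (?S * (?L * ?L)) = ?I * ?S * (?L * ?L)" by (rule assoc_mult_mat[symmetric]) auto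
  also have "\<dots> = ?L * ?L" using Si_S[OF d] by simp
  also have "mtrace (?L * ?L) = (\<Sum>i<d*d. (?L * ?L) $$ (i,i))" unfolding mtrace_def by simp
  also have "\<dots> = (\<Sum>i<d*d. mu d i ^ 2)"
  proof (rule sum.cong[OF refl])
    fix i assume "i \<in> {..<d*d}" hence i: "i < d*d" by simp
    have "(?L * ?L) $$ (i,i) = (\<Sum>k<d*d. ?L $$ (i,k) * ?L $$ (k,i))" by (rule mult_index) (use i in auto)
    also have "\<dots> = (\<Sum>k<d*d. if k = i then mu d i * mu d i else 0)"
      by (rule sum.cong[OF refl]) (auto simp: Lm_def i)
    also have "\<dots> = mu d i ^ 2" using i by (simp add: power2_eq_square)
    finally show "(?L * ?L) $$ (i,i) = mu d i ^ 2" .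
  qed
  finally show ?thesis unfolding e .
qed


lemma proots_lin_prod: "proots (\<Prod>a \<leftarrow> xs. [:- a, 1:]) = mset (xs :: complex list)"
proof (induction xs)
  case Nil then show ?case by simp
next
  case (Cons a xs)
  have ne: "(\<Prod>a \<leftarrow> xs. [:- a, 1:]) \<noteq> (0 :: complex poly)"
    by (auto simp: prod_list_zero_iff)
  have "proots (\<Prod>a \<leftarrow> a # xs. [:- a, 1:]) = proots ([:- a, 1:] * (\<Prod>a \<leftarrow> xs. [:- a, 1:]))" by simp
  also have "\<dots> = proots [:- a, 1:] + proots (\<Prod>a \<leftarrow> xs. [:- a, 1:])"
    by (rule proots_mult) (use ne in auto)
  also have "\<dots> = add_mset a (mset xs)" using Cons by (simp add: proots_linear_factor)
  finally show ?case by simp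
qed

lemma spec_R: assumes d: "d > 0" shows "map_spectrum d (exT d) = mset (map (mu d) [0..<d*d])"
  unfolding map_spectrum_def char_R[OF d] by (rule proots_lin_prod)

lemma spectrum_R: assumes d: "d > 0" shows "spectrum (mat_rep d (exT d)) = mu d ` {..<d*d}"
proof -
  have "spectrum (mat_rep d (exT d)) = {k. poly (char_poly (mat_rep d (exT d))) k = 0}"
    by (rule spectrum_root_char_poly[OF R_carrier])
  also have "\<dots> = mu d ` {..<d*d}"
    unfolding char_R[OF d] poly_prod_list_zero_iff by auto
  finally show ?thesis .
qed

lemma mu_pair: assumes "a < d" "b < d"
  shows "mu d (a*d+b) = (if a = b then (1 + (om d ^ 2) ^ b) / 2 else om d ^ a * cnj (om d ^ b) / 2)"
  using assms unfolding mu_def isd_def by simp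

lemma sum_diag_split: "(\<Sum>a<d. \<Sum>b<(d::nat). if a = b then F a else G a b) = (\<Sum>a<d. \<Sum>b<d. G a b) + (\<Sum>a<d. (F a - G a a :: complex))"
proof -
  have "(\<Sum>a<d. \<Sum>b<(d::nat). if a = b then F a else G a b) = (\<Sum>a<d. \<Sum>b<d. G a b + (if b = a then F a - G a a else 0))"
    by (intro sum.cong refl) auto
  also have "\<dots> = (\<Sum>a<d. (\<Sum>b<d. G a b) + (F a - G a a))" by (simp add: sum.distrib)
  also have "\<dots> = (\<Sum>a<d. \<Sum>b<d. G a b) + (\<Sum>a<d. (F a - G a a))" by (simp add: sum.distrib)
  finally show ?thesis .
qed

lemma om_ne1: assumes "1 < d" shows "om d \<noteq> 1"
proof
  assume "om d = 1"
  hence "(om d ^ 2) ^ 1 = 1" by simp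
  thus False using zeta_pow_ne1[of 1 d] assms by simp
qed

lemma sum_om_ne0: assumes "1 < d" shows "(\<Sum>a<d. om d ^ a) \<noteq> 0"
proof -
  have "(\<Sum>a<d. om d ^ a) = (om d ^ d - 1) / (om d - 1)" using geometric_sum[OF om_ne1[OF assms]] by simp
  also have "\<dots> = -2 / (om d - 1)" using om_pow_d[of d] assms by simp
  finally show ?thesis using om_ne1[OF assms] by simp
qed

lemma sum_mu: assumes d: "1 < d" shows "(\<Sum>i<d*d. mu d i) = (\<Sum>a<d. om d ^ a) * cnj (\<Sum>a<d. om d ^ a) / 2"
proof -
  have "(\<Sum>i<d*d. mu d i) = (\<Sum>a<d. \<Sum>b<d. mu d (a*d+b))" by (rule sum_pair)
  also have "\<dots> = (\<Sum>a<d. \<Sum>b<d. if a = b then (1 + (om d ^ 2) ^ a) / 2 else om d ^ a * cnj (om d ^ b) / 2)"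
    by (intro sum.cong refl) (auto simp: mu_pair)
  also have "\<dots> = (\<Sum>a<d. \<Sum>b<d. om d ^ a * cnj (om d ^ b) / 2) + (\<Sum>a<d. (1 + (om d ^ 2) ^ a) / 2 - om d ^ a * cnj (om d ^ a) / 2)"
    by (rule sum_diag_split)
  also have "(\<Sum>a<d. (1 + (om d ^ 2) ^ a) / 2 - om d ^ a * cnj (om d ^ a) / 2) = (\<Sum>a<d. ((om d ^ 2) ^ 1) ^ a) / 2"
    by (simp add: sum_divide_distrib add_divide_distrib)
  also have "(\<Sum>a<d. ((om d ^ 2) ^ 1) ^ a) = 0" by (rule sum_zeta) (use d in auto)
  also have "(\<Sum>a<d. \<Sum>b<d. om d ^ a * cnj (om d ^ b) / 2) = (\<Sum>a<d. om d ^ a) * cnj (\<Sum>a<d. om d ^ a) / 2"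
    by (simp add: sum_product cnj_sum sum_divide_distrib)
  finally show ?thesis by simp
qed

lemma G_sq: "(om d ^ a * cnj (om d ^ b) / 2) ^ 2 = (om d ^ 2) ^ a * cnj ((om d ^ 2) ^ b) / 4"
proof -
  have "(om d ^ a * cnj (om d ^ b) / 2) ^ 2 = (om d ^ a) ^ 2 * cnj ((om d ^ b) ^ 2) / 4"
    by (simp only: power_mult_distrib power_divide complex_cnj_power) simp
  also have "(om d ^ a) ^ 2 = (om d ^ 2) ^ a" by (rule pow_swap)
  also have "(om d ^ b) ^ 2 = (om d ^ 2) ^ b" by (rule pow_swap)
  finally show ?thesis .
qed

lemma sum_mu2: assumes d: "2 < d" shows "(\<Sum>i<d*d. mu d i ^ 2) = 0"
proof -
  have z1: "(\<Sum>a<d. ((om d ^ 2) ^ 1) ^ a) = 0" by (rule sum_zeta) (use d in auto)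
  have z2: "(\<Sum>a<d. ((om d ^ 2) ^ 2) ^ a) = 0" by (rule sum_zeta) (use d in auto)
  have sq: "(om d ^ a) ^ 2 = (om d ^ 2) ^ a" for a by (rule pow_swap)
  have "(\<Sum>i<d*d. mu d i ^ 2) = (\<Sum>a<d. \<Sum>b<d. mu d (a*d+b) ^ 2)" by (rule sum_pair)
  also have "\<dots> = (\<Sum>a<d. \<Sum>b<d. if a = b then ((1 + (om d ^ 2) ^ a) / 2) ^ 2 else (om d ^ 2) ^ a * cnj ((om d ^ 2) ^ b) / 4)"
  proof (intro sum.cong refl)
    fix a b assume a: "a \<in> {..<d}" and b: "b \<in> {..<d}"
    show "mu d (a*d+b) ^ 2 = (if a = b then ((1 + (om d ^ 2) ^ a) / 2) ^ 2 else (om d ^ 2) ^ a * cnj ((om d ^ 2) ^ b) / 4)"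
      unfolding mu_pair[OF a[simplified] b[simplified]]
      by (cases "a = b") (simp_all only: G_sq if_True if_False simp_thms)
  qed
  also have "\<dots> = (\<Sum>a<d. \<Sum>b<d. (om d ^ 2) ^ a * cnj ((om d ^ 2) ^ b) / 4)
     + (\<Sum>a<d. ((1 + (om d ^ 2) ^ a) / 2) ^ 2 - (om d ^ 2) ^ a * cnj ((om d ^ 2) ^ a) / 4)"
    by (rule sum_diag_split)
  also have "(\<Sum>a<d. \<Sum>b<d. (om d ^ 2) ^ a * cnj ((om d ^ 2) ^ b) / 4) = (\<Sum>a<d. ((om d ^ 2) ^ 1) ^ a) * cnj (\<Sum>a<d. ((om d ^ 2) ^ 1) ^ a) / 4"
    by (simp add: sum_product cnj_sum sum_divide_distrib)
  also have "(\<Sum>a<d. ((1 + (om d ^ 2) ^ a) / 2) ^ 2 - (om d ^ 2) ^ a * cnj ((om d ^ 2) ^ a) / 4)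
     = (2 * (\<Sum>a<d. ((om d ^ 2) ^ 1) ^ a) + (\<Sum>a<d. ((om d ^ 2) ^ 2) ^ a)) / 4"
  proof -
    have "((1 + (om d ^ 2) ^ a) / 2) ^ 2 - (om d ^ 2) ^ a * cnj ((om d ^ 2) ^ a) / 4
       = (2 * ((om d ^ 2) ^ 1) ^ a + ((om d ^ 2) ^ 2) ^ a) / 4" for a
    proof -
      have c1: "(om d ^ 2) ^ a * cnj ((om d ^ 2) ^ a) = 1" using cnj_om_pow(2)[of d "2*a"] by (simp add: power_mult)
      have c2: "((om d ^ 2) ^ 2) ^ a = ((om d ^ 2) ^ a) ^ 2" by (rule pow_swap)
      show ?thesis unfolding c1 c2 by (simp add: power2_eq_square field_simps)
    qed
    hence "(\<Sum>a<d. ((1 + (om d ^ 2) ^ a) / 2) ^ 2 - (om d ^ 2) ^ a * cnj ((om d ^ 2) ^ a) / 4)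
       = (\<Sum>a<d. (2 * ((om d ^ 2) ^ 1) ^ a + ((om d ^ 2) ^ 2) ^ a) / 4)" by (intro sum.cong refl)
    also have "\<dots> = (\<Sum>a<d. 2 * ((om d ^ 2) ^ 1) ^ a + ((om d ^ 2) ^ 2) ^ a) / 4"
      by (rule sum_divide_distrib[symmetric])
    also have "(\<Sum>a<d. 2 * ((om d ^ 2) ^ 1) ^ a + ((om d ^ 2) ^ 2) ^ a) = 2 * (\<Sum>a<d. ((om d ^ 2) ^ 1) ^ a) + (\<Sum>a<d. ((om d ^ 2) ^ 2) ^ a)"
      by (simp only: sum.distrib sum_distrib_left)
    finally show ?thesis .
  qed
  finally show ?thesis by (simp only: z1 z2) simp
qed


lemma unit_sum: assumes "cmod w = 1" "cmod (1 + w) = 2" shows "w = 1"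
proof -
  have e1: "Re w ^ 2 + Im w ^ 2 = 1" using assms(1) cmod_power2[of w] by simp
  have e2: "(1 + Re w) ^ 2 + Im w ^ 2 = 4" using assms(2) cmod_power2[of "1 + w"] by simp
  hence "1 + 2 * Re w + Re w ^ 2 + Im w ^ 2 = 4" by (simp add: power2_sum)
  hence r: "Re w = 1" using e1 by linarith
  hence "Im w ^ 2 = 0" using e1 by simp
  hence "Im w = 0" by simp
  thus ?thesis using r by (simp add: complex_eq_iff)
qed

lemma norm_om[simp]: "cmod (om d) = 1" "cmod (cnj (om d) ^ k) = 1"
  unfolding om_def by (simp_all add: norm_power)

lemma zeta_norm: "cmod ((om d ^ 2) ^ b) = 1"
  by (simp add: norm_power)

lemma mu_props: assumes d: "1 < d" and i: "i < d*d"
  shows "cmod (mu d i) \<le> 1" "cmod (mu d i) = 1 \<Longrightarrow> mu d i = 1" "(mu d i = 1) = (i = 0)"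
proof -
  have b: "i div d < d" "i mod d < d" using idx_bounds i by auto
  have "cmod (mu d i) \<le> 1 \<and> (cmod (mu d i) = 1 \<longrightarrow> mu d i = 1) \<and> ((mu d i = 1) = (i = 0))"
  proof (cases "isd d i")
    case True
    define w where "w = (om d ^ 2) ^ (i mod d)"
    have w1: "cmod w = 1" unfolding w_def by (rule zeta_norm)
    have m: "mu d i = (1 + w) / 2" unfolding mu_def w_def using True by simp
    have "cmod (1 + w) \<le> cmod (1::complex) + cmod w" by (rule norm_triangle_ineq)
    hence le: "cmod (mu d i) \<le> 1" unfolding m using w1 by (simp add: norm_divide)
    have eq: "cmod (mu d i) = 1 \<longrightarrow> mu d i = 1"
    proof
      assume "cmod (mu d i) = 1"
      hence "cmod (1 + w) = 2" unfolding m by (simp add: norm_divide)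
      hence "w = 1" using unit_sum w1 by blast
      thus "mu d i = 1" unfolding m by simp
    qed
    have "(mu d i = 1) = (w = 1)" unfolding m by auto
    also have "(w = 1) = (i mod d = 0)"
    proof
      assume "w = 1" thus "i mod d = 0" using zeta_pow_ne1[of "i mod d" d] b unfolding w_def by (cases "i mod d = 0") auto
    qed (simp add: w_def)
    also have "(i mod d = 0) = (i = 0)"
    proof
      assume "i mod d = 0"
      hence "i div d = 0" using True unfolding isd_def by simp
      thus "i = 0" using \<open>i mod d = 0\<close> by (metis div_mult_mod_eq mult_0 add_0)
    qed simp
    finally show ?thesis using le eq by simp
  next
    case False
    have m: "cmod (mu d i) = 1/2" unfolding mu_def using False by (simp add: norm_mult norm_divide)
    have "i \<noteq> 0"
    proof
      assume "i = 0" hence "isd d i" unfolding isd_def by simp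
      thus False using False by simp
    qed
    thus ?thesis using m by auto
  qed
  thus "cmod (mu d i) \<le> 1" "cmod (mu d i) = 1 \<Longrightarrow> mu d i = 1" "(mu d i = 1) = (i = 0)" by auto
qed

lemma specrad_R: assumes d: "1 < d" shows "spectral_radius (mat_rep d (exT d)) = 1"
proof -
  have "spectral_radius (mat_rep d (exT d)) = Max (norm ` mu d ` {..<d*d})"
    unfolding spectral_radius_def using d by (simp add: spectrum_R)
  also have "\<dots> = 1"
  proof (rule Max_eqI)
    show "finite (norm ` mu d ` {..<d*d})" by simp
    show "y \<le> 1" if "y \<in> norm ` mu d ` {..<d*d}" for y using that mu_props(1)[OF d] by auto
    have "0 < d*d" using d by simp
    moreover have "mu d 0 = 1" using mu_props(3)[OF d, of 0] d by simp
    ultimately show "1 \<in> norm ` mu d ` {..<d*d}" by (intro image_eqI[of _ _ "mu d 0"]) auto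
  qed
  finally show ?thesis .
qed

lemma count_one: assumes d: "1 < d" shows "count (mset (map (mu d) [0..<d*d])) 1 = 1"
proof -
  have N: "0 < d*d" using d by simp
  have "[0..<d*d] = 0 # [1..<d*d]" using N by (simp add: upt_conv_Cons)
  hence "mset (map (mu d) [0..<d*d]) = add_mset (mu d 0) (mset (map (mu d) [1..<d*d]))" by simp
  moreover have "mu d 0 = 1" using mu_props(3)[OF d N] by simp
  moreover have "1 \<notin> set (map (mu d) [1..<d*d])" using mu_props(3)[OF d] by auto
  ultimately show ?thesis by (simp add: count_eq_zero_iff)
qed

lemma pos_def_one: "pos_def d (1\<^sub>m d)"
proof -
  have "0 < conjugate v \<bullet> (1\<^sub>m d *\<^sub>v v)" if v: "v \<in> carrier_vec d" and nz: "v \<noteq> 0\<^sub>v d" for v :: "complex vec"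
  proof -
  have "conjugate v \<bullet> (1\<^sub>m d *\<^sub>v v) = v \<bullet>c v" using v by (simp add: conjugate_vec_sprod_comm)
  moreover have "v \<bullet>c v \<ge> 0" by (rule conjugate_square_ge_0_vec)
  moreover have "v \<bullet>c v \<noteq> 0" using conjugate_square_eq_0_vec[OF v] nz by simp
  ultimately show "0 < conjugate v \<bullet> (1\<^sub>m d *\<^sub>v v)" by simp
  qed
  thus ?thesis unfolding pos_def_def by auto
qed

lemma one_lt_pos: "1 < (d::nat) \<Longrightarrow> 0 < d" by simp

lemma exT_prim: assumes d: "1 < d" shows "primitive d (exT d)"
  unfolding primitive_def Let_def specrad_R[OF d] spec_R[OF one_lt_pos[OF d]]
proof (intro conjI)
  show "count (mset (map (mu d) [0..<d*d])) (complex_of_real 1) = 1" using count_one[OF d] by simp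
  show "\<exists>X. pos_def d X \<and> exT d X = complex_of_real 1 \<cdot>\<^sub>m X"
    by (rule exI[of _ "1\<^sub>m d"]) (use pos_def_one exT_unital in \<open>auto simp: unital_def\<close>)
  show "\<forall>z\<in>#mset (map (mu d) [0..<d*d]). cmod z = 1 \<longrightarrow> z = complex_of_real 1"
    using mu_props(2)[OF d] by auto
qed

lemma moment_filter: "0 < k \<Longrightarrow> moment k (filter_mset (\<lambda>z. z \<noteq> 0) M) = moment k M"
  unfolding moment_def by (induction M) auto

lemma moment_list: "moment k (mset (map (mu d) [0..<d*d])) = (\<Sum>i<d*d. mu d i ^ k)"
  unfolding moment_def mset_map[symmetric] sum_mset_sum_list map_map
  by (simp add: interv_sum_list_conv_sum_set_nat lessThan_atLeast0 comp_def)


lemma pos_sq: assumes "(0::complex) < s * cnj s / 2" shows "\<not> ((s * cnj s / 2) ^ 2 \<le> of_nat D ^ (2 - 1) * 0)"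
proof -
  define t where "t = s * cnj s / 2"
  have "Im t = 0" "0 < Re t" using assms unfolding t_def less_complex_def by auto
  hence "0 < Re (t ^ 2)" by (simp add: Re_power2)
  thus ?thesis unfolding t_def[symmetric] by (simp add: less_eq_complex_def)
qed

theorem mainTheorem9:
  fixes d :: nat
  assumes "d > 2"
  shows "completely_positive d (exT d) \<and> trace_preserving d (exT d) \<and> unital d (exT d)
    \<and> primitive d (exT d)
    \<and> mtrace (mat_rep d (exT d)) > 0
    \<and> mtrace (mat_rep d (exT d) * mat_rep d (exT d)) = 0
    \<and> (let \<Lambda> = filter_mset (\<lambda>z. z \<noteq> 0) (map_spectrum d (exT d)) in
         moment 1 \<Lambda> > 0 \<and> moment 2 \<Lambda> = 0 \<and>
         (\<forall>D :: nat. \<not> (moment 1 \<Lambda> ^ 2 \<le> of_nat D ^ (2 - 1) * moment (1 * 2) \<Lambda>)))"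
proof -
  have d0: "0 < d" and d1: "1 < d" using assms by auto
  define s where "s = (\<Sum>a<d. om d ^ a)"
  have sne: "s \<noteq> 0" unfolding s_def by (rule sum_om_ne0[OF d1])
  have tr1: "mtrace (mat_rep d (exT d)) = s * cnj s / 2"
    unfolding trace_R[OF d0] sum_mu[OF d1] s_def ..
  have pos: "0 < s * cnj s / 2"
  proof -
    have "s * cnj s = complex_of_real ((cmod s)\<^sup>2)" by (rule complex_norm_square[symmetric])
    moreover have "0 < (cmod s)\<^sup>2" using sne by simp
    ultimately show ?thesis by (simp add: less_complex_def)
  qed
  have tr2: "mtrace (mat_rep d (exT d) * mat_rep d (exT d)) = 0"
    unfolding trace_R2[OF d0] by (rule sum_mu2[OF assms])
  have m1: "moment 1 (filter_mset (\<lambda>z. z \<noteq> 0) (map_spectrum d (exT d))) = s * cnj s / 2"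
  proof -
    have "moment 1 (filter_mset (\<lambda>z. z \<noteq> 0) (map_spectrum d (exT d))) = moment 1 (map_spectrum d (exT d))"
      by (rule moment_filter) simp
    also have "\<dots> = (\<Sum>i<d*d. mu d i ^ 1)" unfolding spec_R[OF d0] by (rule moment_list)
    also have "\<dots> = s * cnj s / 2" using sum_mu[OF d1] unfolding s_def by simp
    finally show ?thesis .
  qed
  have m2: "moment 2 (filter_mset (\<lambda>z. z \<noteq> 0) (map_spectrum d (exT d))) = 0"
  proof -
    have "moment 2 (filter_mset (\<lambda>z. z \<noteq> 0) (map_spectrum d (exT d))) = moment 2 (map_spectrum d (exT d))"
      by (rule moment_filter) simp
    also have "\<dots> = (\<Sum>i<d*d. mu d i ^ 2)" unfolding spec_R[OF d0] by (rule moment_list)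
    also have "\<dots> = 0" by (rule sum_mu2[OF assms])
    finally show ?thesis .
  qed
  show ?thesis
    unfolding Let_def mult_1 tr1 tr2 m1 m2
    using exT_cp[OF d0] exT_tp[OF d0] exT_unital[of d] exT_prim[OF d1] pos pos_sq[OF pos]
    by blast
qed

end
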